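(* Identify $\operatorname{Pic}(\mathcal{X}_n)$ with the standard $D_5^{(1)}$ Picard lattice via the preliminary basis change $\mathcal{H}_f=2\mathcal{H}_x+\mathcal{H}_y-\mathcal{F}_{1356}$, $\mathcal{H}_g=\mathcal{H}_x$, $\mathcal{E}_1=\mathcal{H}_x-\mathcal{F}_1$, $\mathcal{E}_2=\mathcal{F}_2$, $\mathcal{E}_3=\mathcal{H}_x-\mathcal{F}_3$, $\mathcal{E}_4=\mathcal{F}_4$, $\mathcal{E}_5=\mathcal{H}_x-\mathcal{F}_6$, $\mathcal{E}_6=\mathcal{H}_x-\mathcal{F}_5$, $\mathcal{E}_7=\mathcal{F}_7$, $\mathcal{E}_8=\mathcal{F}_8$. Under this identification the standard surface roots $\delta_i$ coincide with the surface roots of $\mathcal{X}_n$, the standard symmetry roots become $\alpha_0=\mathcal{F}_1-\mathcal{F}_2$, $\alpha_1=\mathcal{H}_y-\mathcal{F}_{13}$, $\alpha_2=\mathcal{F}_3-\mathcal{F}_4$, $\alpha_3=2\mathcal{H}_x+\mathcal{H}_y-\mathcal{F}_{135678}$, and the map $\varphi_*$ acts on them as the translation $$(\alpha_0,\alpha_1,\alpha_2,\alpha_3)\mapsto(\alpha_0,\alpha_1-\delta,\alpha_2,\alpha_3+\delta),\qquad \delta=-\mathcal{K}_{\mathcal{X}}.$$ Moreover, on the Picard lattice, $\varphi_*=\sigma_3\sigma_2w_1w_2w_0w_1$, hence $\varphi_*=w_1\circ\phi_*\circ w_1$ where $\phi_*=\sigma_3\sigma_2w_3w_1w_2w_0$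 is the standard translation $(\alpha_0,\alpha_1,\alpha_2,\alpha_3)\mapsto(\alpha_0-\delta,\alpha_1+\delta,\alpha_2-\delta,\alpha_3+\delta)$.
   Context: Standard $D_5^{(1)}$ Picard lattice: generators $\mathcal{H}_f,\mathcal{H}_g,\mathcal{E}_1,\dots,\mathcal{E}_8$ with $\mathcal{H}_f\cdot\mathcal{H}_g=1$, $\mathcal{H}_f^2=\mathcal{H}_g^2=0$, $\mathcal{H}\cdot\mathcal{E}_i=0$, $\mathcal{E}_i\cdot\mathcal{E}_j=-\delta_{ij}$. Standard surface roots: $\delta_0=\mathcal{E}_1-\mathcal{E}_2$, $\delta_1=\mathcal{E}_3-\mathcal{E}_4$, $\delta_2=\mathcal{H}_f-\mathcal{E}_1-\mathcal{E}_3$, $\delta_3=\mathcal{H}_g-\mathcal{E}_5-\mathcal{E}_7$, $\delta_4=\mathcal{E}_5-\mathcal{E}_6$, $\delta_5=\mathcal{E}_7-\mathcal{E}_8$. Standard symmetry roots ($A_3^{(1)}$, cyclic diagram $\alpha_0-\alpha_1-\alpha_2-\alpha_3-\alpha_0$): $\alpha_0=\mathcal{H}_g-\mathcal{E}_1-\mathcal{E}_2$, $\alpha_1=\mathcal{H}_f-\mathcal{E}_5-\mathcal{E}_6$, $\alpha_2=\mathcal{H}_g-\mathcal{E}_3-\mathcal{E}_4$, $\alpha_3=\mathcal{H}_f-\mathcal{E}_7-\mathcal{E}_8$; $\delta=\alpha_0+\alpha_1+\alpha_2+\alpha_3=2\mathcal{H}_f+2\mathcal{H}_g-\sum\mathcal{E}_i$.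 Reflections $w_j(\mathcal{C})=\mathcal{C}+(\mathcal{C}\cdot\alpha_j)\alpha_j$, and for a root $r$ write $w_r(\mathcal{C})=\mathcal{C}+(\mathcal{C}\cdot r)r$; $\sigma_2=w_{\mathcal{E}_1-\mathcal{E}_3}\circ w_{\mathcal{E}_2-\mathcal{E}_4}$, $\sigma_3=w_{\mathcal{E}_5-\mathcal{E}_7}\circ w_{\mathcal{E}_6-\mathcal{E}_8}$. $\mathcal{X}_n$, its Picard lattice ($\mathcal{H}_x,\mathcal{H}_y,\mathcal{F}_1,\dots,\mathcal{F}_8$), its surface roots $\delta_0=\mathcal{H}_x-\mathcal{F}_1-\mathcal{F}_2$, $\delta_1=\mathcal{H}_x-\mathcal{F}_3-\mathcal{F}_4$, $\delta_2=\mathcal{H}_y-\mathcal{F}_5-\mathcal{F}_6$, $\delta_3=\mathcal{F}_6-\mathcal{F}_7$, $\delta_4=\mathcal{F}_5-\mathcal{F}_6$, $\delta_5=\mathcal{F}_7-\mathcal{F}_8$, and $\varphi_*$ are as follows: $\mathcal{X}_n$ is $\mathbb{P}^1\times\mathbb{P}^1$ blown up at $q_1(x=0,y=n)$, $q_2(x=0,y=n+\beta)$, $q_3(1/x=0,y=0)$, $q_4(1/x=0,y=-\alpha)$ and a cascade $q_5\leftarrow q_6\leftarrow q_7\leftarrow q_8$ over $(x=1/s,y=\infty)$; $\varphi_*$ is the pushforward of the forward map of the recurrence $x_nx_{n+1}=\frac{y_n^2-(2n+\beta)y_n+n(n+\beta)}{s^2(y_n^2+\alpha y_n)}$, $y_n+y_{n-1}=-\frac{\alpha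 s^2x_n^2+s(2n-1-\alpha+\beta+s)x_n-2n-\beta+1}{(1-sx_n)^2}$, given by $\mathcal{H}_x\mapsto5\mathcal{H}_x+2\mathcal{H}_y-\mathcal{F}_{1234}-2\mathcal{F}_{5678}$, $\mathcal{H}_y\mapsto2\mathcal{H}_x+\mathcal{H}_y-\mathcal{F}_{5678}$, $\mathcal{F}_1\mapsto2\mathcal{H}_x+\mathcal{H}_y-\mathcal{F}_{25678}$, $\mathcal{F}_2\mapsto2\mathcal{H}_x+\mathcal{H}_y-\mathcal{F}_{15678}$, $\mathcal{F}_3\mapsto2\mathcal{H}_x+\mathcal{H}_y-\mathcal{F}_{45678}$, $\mathcal{F}_4\mapsto2\mathcal{H}_x+\mathcal{H}_y-\mathcal{F}_{35678}$, $\mathcal{F}_5\mapsto\mathcal{H}_x-\mathcal{F}_8$, $\mathcal{F}_6\mapsto\mathcal{H}_x-\mathcal{F}_7$, $\mathcal{F}_7\mapsto\mathcal{H}_x-\mathcal{F}_6$, $\mathcal{F}_8\mapsto\mathcal{H}_x-\mathcal{F}_5$ (image classes on $\mathcal{X}_{n+1}$). Notation $\mathcal{F}_{i\cdots j}$ = sum of the listed $\mathcal{F}$'s. *)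

theory Defs
  imports "HOL-Analysis.Analysis"
begin

text \<open>Picard lattices of rank 10 are modelled as int^10. Coordinate 0 is the
coefficient of H_f (resp. H_x), coordinate 1 that of H_g (resp. H_y), and
coordinate k+1 that of E_k (resp. F_k), k = 1..8.\<close>

type_synonym pic = "int ^ 10"

definition H1 :: pic where "H1 = axis 0 1"
definition H2 :: pic where "H2 = axis 1 1"
definition Ex :: "nat \<Rightarrow> pic" where "Ex k = axis (of_nat (k + 1)) 1"

abbreviation Hf where "Hf \<equiv> H1"
abbreviation Hg where "Hg \<equiv> H2"
abbreviation E where "E \<equiv> Ex"
abbreviation Hx where "Hx \<equiv> H1"
abbreviation Hy where "Hy \<equiv> H2"
abbreviation F where "F \<equiv> Ex"

definition ip :: "pic \<Rightarrow> pic \<Rightarrow> int" where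
  "ip C D = C $ 0 * D $ 1 + C $ 1 * D $ 0
     - (\<Sum>k\<in>{1..8::nat}. C $ of_nat (k + 1) * D $ of_nat (k + 1))"

definition Fsum :: "nat list \<Rightarrow> pic" where "Fsum ks = sum_list (map F ks)"

definition wr :: "pic \<Rightarrow> pic \<Rightarrow> pic" where "wr r C = C + (ip C r) *s r"

definition dStd :: "nat \<Rightarrow> pic" where
  "dStd k = [E 1 - E 2, E 3 - E 4, Hf - E 1 - E 3, Hg - E 5 - E 7, E 5 - E 6, E 7 - E 8] ! k"

definition aStd :: "nat \<Rightarrow> pic" where
  "aStd k = [Hg - E 1 - E 2, Hf - E 5 - E 6, Hg - E 3 - E 4, Hf - E 7 - E 8] ! k"

definition deltaStd :: pic where
  "deltaStd = 2 *s Hf + 2 *s Hg - (\<Sum>k\<in>{1..8::nat}. E k)"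

definition w :: "nat \<Rightarrow> pic \<Rightarrow> pic" where "w j = wr (aStd j)"

definition sigma2 :: "pic \<Rightarrow> pic" where
  "sigma2 = wr (E 1 - E 3) \<circ> wr (E 2 - E 4)"
definition sigma3 :: "pic \<Rightarrow> pic" where
  "sigma3 = wr (E 5 - E 7) \<circ> wr (E 6 - E 8)"

definition dX :: "nat \<Rightarrow> pic" where
  "dX k = [Hx - F 1 - F 2, Hx - F 3 - F 4, Hy - F 5 - F 6, F 6 - F 7, F 5 - F 6, F 7 - F 8] ! k"

definition KX :: pic where
  "KX = - 2 *s Hx - 2 *s Hy + (\<Sum>k\<in>{1..8::nat}. F k)"

definition phiImg :: "nat \<Rightarrow> pic" where
  "phiImg k = [5 *s Hx + 2 *s Hy - Fsum [1,2,3,4] - 2 *s Fsum [5,6,7,8],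
               2 *s Hx + Hy - Fsum [5,6,7,8],
               2 *s Hx + Hy - Fsum [2,5,6,7,8],
               2 *s Hx + Hy - Fsum [1,5,6,7,8],
               2 *s Hx + Hy - Fsum [4,5,6,7,8],
               2 *s Hx + Hy - Fsum [3,5,6,7,8],
               Hx - F 8, Hx - F 7, Hx - F 6, Hx - F 5] ! k"

definition phiX :: "pic \<Rightarrow> pic" where
  "phiX C = (\<Sum>k<10. C $ of_nat k *s phiImg k)"

definition iotaImg :: "nat \<Rightarrow> pic" where
  "iotaImg k = [2 *s Hx + Hy - Fsum [1,3,5,6], Hx,
                Hx - F 1, F 2, Hx - F 3, F 4, Hx - F 6, Hx - F 5, F 7, F 8] ! k"

definition iota :: "pic \<Rightarrow> pic" where
  "iota C = (\<Sum>k<10. C $ of_nat k *s iotaImg k)"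

end

theory Submission
  imports Defs
begin

lemma exhaust_10:
  fixes x :: 10
  shows "x = 0 \<or> x = 1 \<or> x = 2 \<or> x = 3 \<or> x = 4 \<or> x = 5 \<or> x = 6 \<or> x = 7 \<or> x = 8 \<or> x = 9"
proof (induct x)
  case (of_int z)
  then have "0 \<le> z" "z < 10" by simp_all
  then have "z = 0 \<or> z = 1 \<or> z = 2 \<or> z = 3 \<or> z = 4 \<or> z = 5 \<or> z = 6 \<or> z = 7 \<or> z = 8 \<or> z = 9" by arith
  then show ?case by auto
qed

lemma vec_eq10: "((x::pic) = y) \<longleftrightarrow> x$0 = y$0 \<and> x$1 = y$1 \<and> x$2 = y$2 \<and> x$3 = y$3 \<and> x$4 = y$4
  \<and> x$5 = y$5 \<and> x$6 = y$6 \<and> x$7 = y$7 \<and> x$8 = y$8 \<and> x$9 = y$9"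
  unfolding vec_eq_iff
  apply (rule iffI)
   apply simp
  apply (intro allI)
  subgoal for i using exhaust_10[of i] by (elim disjE) simp_all
  done

lemma ip_expl: "ip C D = C $ 0 * D $ 1 + C $ 1 * D $ 0 - C$2*D$2 - C$3*D$3 - C$4*D$4 - C$5*D$5
  - C$6*D$6 - C$7*D$7 - C$8*D$8 - C$9*D$9"
  by (simp add: ip_def numeral_eq_Suc atLeastAtMostSuc_conv)

lemma sum10: "(\<Sum>k<(10::nat). f k) = f 0 + f 1 + f 2 + f 3 + f 4 + f 5 + f 6 + f 7 + f 8 + (f 9 :: pic)"
  by (simp add: numeral_eq_Suc lessThan_Suc add.commute add.left_commute)

lemma sum18: "(\<Sum>k\<in>{1..8::nat}. f k) = f 1 + f 2 + f 3 + f 4 + f 5 + f 6 + f 7 + (f 8 :: pic)"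
  by (simp add: numeral_eq_Suc atLeastAtMostSuc_conv add.commute add.left_commute)

lemma deltaStd_e: "deltaStd = 2 *s Hf + 2 *s Hg - (E 1 + E 2 + E 3 + E 4 + E 5 + E 6 + E 7 + E 8)"
  unfolding deltaStd_def sum18 ..

lemma KX_e: "KX = - 2 *s Hx - 2 *s Hy + (F 1 + F 2 + F 3 + F 4 + F 5 + F 6 + F 7 + F 8)"
  unfolding KX_def sum18 ..

lemmas Sx = KX_e deltaStd_e H1_def H2_def Ex_def axis_def Fsum_def phiImg_def iotaImg_def aStd_def dStd_def dX_def

definition iinv :: "pic \<Rightarrow> pic" where
  "iinv C = (\<chi> i. if i = 0 then C$1 else (if i = 1 then C$0 + 2*C$1 + C$2 + C$4 + C$6 + C$7 else (if i = 2 then - C$1 - C$2 else (if i = 3 then C$3 else (if i = 4 then - C$1 - C$4 else (if i = 5 then C$5 else (if i = 6 then - C$1 - C$7 else (if i = 7 then - C$1 - C$6 else (if i = 8 then C$8 else (C$9))))))))))"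

lemma iota_c:
  "iota C $ 0 = 2 * C $ 0 + C $ 1 + C $ 2 + C $ 4 + C $ 6 + C $ 7"
  "iota C $ 1 = C $ 0"
  "iota C $ 2 = - C $ 0 - C $ 2"
  "iota C $ 3 = C $ 3"
  "iota C $ 4 = - C $ 0 - C $ 4"
  "iota C $ 5 = C $ 5"
  "iota C $ 6 = - C $ 0 - C $ 7"
  "iota C $ 7 = - C $ 0 - C $ 6"
  "iota C $ 8 = C $ 8"
  "iota C $ 9 = C $ 9"
  by (simp_all add: iota_def sum10 Sx algebra_simps)

lemma phiX_c:
  "phiX C $ 0 = 5 * C $ 0 + 2 * C $ 1 + 2 * C $ 2 + 2 * C $ 3 + 2 * C $ 4 + 2 * C $ 5 + C $ 6 + C $ 7 + C $ 8 + C $ 9"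
  "phiX C $ 1 = 2 * C $ 0 + C $ 1 + C $ 2 + C $ 3 + C $ 4 + C $ 5"
  "phiX C $ 2 = - C $ 0 - C $ 3"
  "phiX C $ 3 = - C $ 0 - C $ 2"
  "phiX C $ 4 = - C $ 0 - C $ 5"
  "phiX C $ 5 = - C $ 0 - C $ 4"
  "phiX C $ 6 = - 2 * C $ 0 - C $ 1 - C $ 2 - C $ 3 - C $ 4 - C $ 5 - C $ 9"
  "phiX C $ 7 = - 2 * C $ 0 - C $ 1 - C $ 2 - C $ 3 - C $ 4 - C $ 5 - C $ 8"
  "phiX C $ 8 = - 2 * C $ 0 - C $ 1 - C $ 2 - C $ 3 - C $ 4 - C $ 5 - C $ 7"
  "phiX C $ 9 = - 2 * C $ 0 - C $ 1 - C $ 2 - C $ 3 - C $ 4 - C $ 5 - C $ 6"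
  by (simp_all add: phiX_def sum10 Sx algebra_simps)

lemma w0_c:
  "w 0 C $ 0 = C $ 0"
  "w 0 C $ 1 = C $ 0 + C $ 1 + C $ 2 + C $ 3"
  "w 0 C $ 2 = - C $ 0 - C $ 3"
  "w 0 C $ 3 = - C $ 0 - C $ 2"
  "w 0 C $ 4 = C $ 4"
  "w 0 C $ 5 = C $ 5"
  "w 0 C $ 6 = C $ 6"
  "w 0 C $ 7 = C $ 7"
  "w 0 C $ 8 = C $ 8"
  "w 0 C $ 9 = C $ 9"
  by (simp_all add: w_def wr_def ip_expl Sx algebra_simps)

lemma w1_c:
  "w 1 C $ 0 = C $ 0 + C $ 1 + C $ 6 + C $ 7"
  "w 1 C $ 1 = C $ 1"
  "w 1 C $ 2 = C $ 2"
  "w 1 C $ 3 = C $ 3"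
  "w 1 C $ 4 = C $ 4"
  "w 1 C $ 5 = C $ 5"
  "w 1 C $ 6 = - C $ 1 - C $ 7"
  "w 1 C $ 7 = - C $ 1 - C $ 6"
  "w 1 C $ 8 = C $ 8"
  "w 1 C $ 9 = C $ 9"
  by (simp_all add: w_def wr_def ip_expl Sx algebra_simps)

lemma w2_c:
  "w 2 C $ 0 = C $ 0"
  "w 2 C $ 1 = C $ 0 + C $ 1 + C $ 4 + C $ 5"
  "w 2 C $ 2 = C $ 2"
  "w 2 C $ 3 = C $ 3"
  "w 2 C $ 4 = - C $ 0 - C $ 5"
  "w 2 C $ 5 = - C $ 0 - C $ 4"
  "w 2 C $ 6 = C $ 6"
  "w 2 C $ 7 = C $ 7"
  "w 2 C $ 8 = C $ 8"
  "w 2 C $ 9 = C $ 9"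
  by (simp_all add: w_def wr_def ip_expl Sx algebra_simps)

lemma w3_c:
  "w 3 C $ 0 = C $ 0 + C $ 1 + C $ 8 + C $ 9"
  "w 3 C $ 1 = C $ 1"
  "w 3 C $ 2 = C $ 2"
  "w 3 C $ 3 = C $ 3"
  "w 3 C $ 4 = C $ 4"
  "w 3 C $ 5 = C $ 5"
  "w 3 C $ 6 = C $ 6"
  "w 3 C $ 7 = C $ 7"
  "w 3 C $ 8 = - C $ 1 - C $ 9"
  "w 3 C $ 9 = - C $ 1 - C $ 8"
  by (simp_all add: w_def wr_def ip_expl Sx algebra_simps)

lemma sigma2_c:
  "sigma2 C $ 0 = C $ 0"
  "sigma2 C $ 1 = C $ 1"
  "sigma2 C $ 2 = C $ 4"
  "sigma2 C $ 3 = C $ 5"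
  "sigma2 C $ 4 = C $ 2"
  "sigma2 C $ 5 = C $ 3"
  "sigma2 C $ 6 = C $ 6"
  "sigma2 C $ 7 = C $ 7"
  "sigma2 C $ 8 = C $ 8"
  "sigma2 C $ 9 = C $ 9"
  by (simp_all add: sigma2_def wr_def ip_expl Sx algebra_simps)

lemma sigma3_c:
  "sigma3 C $ 0 = C $ 0"
  "sigma3 C $ 1 = C $ 1"
  "sigma3 C $ 2 = C $ 2"
  "sigma3 C $ 3 = C $ 3"
  "sigma3 C $ 4 = C $ 4"
  "sigma3 C $ 5 = C $ 5"
  "sigma3 C $ 6 = C $ 8"
  "sigma3 C $ 7 = C $ 9"
  "sigma3 C $ 8 = C $ 6"
  "sigma3 C $ 9 = C $ 7"
  by (simp_all add: sigma3_def wr_def ip_expl Sx algebra_simps)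

lemma iinv_c:
  "iinv C $ 0 = C $ 1"
  "iinv C $ 1 = C $ 0 + 2 * C $ 1 + C $ 2 + C $ 4 + C $ 6 + C $ 7"
  "iinv C $ 2 = - C $ 1 - C $ 2"
  "iinv C $ 3 = C $ 3"
  "iinv C $ 4 = - C $ 1 - C $ 4"
  "iinv C $ 5 = C $ 5"
  "iinv C $ 6 = - C $ 1 - C $ 7"
  "iinv C $ 7 = - C $ 1 - C $ 6"
  "iinv C $ 8 = C $ 8"
  "iinv C $ 9 = C $ 9"
  by (simp_all add: iinv_def Sx algebra_simps)


lemma iota_iinv: "iota (iinv C) = C" "iinv (iota C) = C"
  by (simp_all only: vec_eq10 iota_c iinv_c, simp_all)

lemma bij_iota: "bij iota"
  by (rule o_bij[of iinv]) (simp_all add: fun_eq_iff iota_iinv)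

lemma A1_c:
  "w 0 (w 1 C) $ 0 = C $ 0 + C $ 1 + C $ 6 + C $ 7"
  "w 0 (w 1 C) $ 1 = C $ 0 + 2 * C $ 1 + C $ 2 + C $ 3 + C $ 6 + C $ 7"
  "w 0 (w 1 C) $ 2 = - C $ 0 - C $ 1 - C $ 3 - C $ 6 - C $ 7"
  "w 0 (w 1 C) $ 3 = - C $ 0 - C $ 1 - C $ 2 - C $ 6 - C $ 7"
  "w 0 (w 1 C) $ 4 = C $ 4"
  "w 0 (w 1 C) $ 5 = C $ 5"
  "w 0 (w 1 C) $ 6 = - C $ 1 - C $ 7"
  "w 0 (w 1 C) $ 7 = - C $ 1 - C $ 6"
  "w 0 (w 1 C) $ 8 = C $ 8"
  "w 0 (w 1 C) $ 9 = C $ 9"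
  by (simp_all only: w0_c w1_c) (simp_all add: algebra_simps)?

lemma A2_c:
  "w 2 (w 0 (w 1 C)) $ 0 = C $ 0 + C $ 1 + C $ 6 + C $ 7"
  "w 2 (w 0 (w 1 C)) $ 1 = 2 * C $ 0 + 3 * C $ 1 + C $ 2 + C $ 3 + C $ 4 + C $ 5 + 2 * C $ 6 + 2 * C $ 7"
  "w 2 (w 0 (w 1 C)) $ 2 = - C $ 0 - C $ 1 - C $ 3 - C $ 6 - C $ 7"
  "w 2 (w 0 (w 1 C)) $ 3 = - C $ 0 - C $ 1 - C $ 2 - C $ 6 - C $ 7"
  "w 2 (w 0 (w 1 C)) $ 4 = - C $ 0 - C $ 1 - C $ 5 - C $ 6 - C $ 7"
  "w 2 (w 0 (w 1 C)) $ 5 = - C $ 0 - C $ 1 - C $ 4 - C $ 6 - C $ 7"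
  "w 2 (w 0 (w 1 C)) $ 6 = - C $ 1 - C $ 7"
  "w 2 (w 0 (w 1 C)) $ 7 = - C $ 1 - C $ 6"
  "w 2 (w 0 (w 1 C)) $ 8 = C $ 8"
  "w 2 (w 0 (w 1 C)) $ 9 = C $ 9"
  by (simp_all only: w2_c A1_c) (simp_all add: algebra_simps)?

lemma A3_c:
  "w 1 (w 2 (w 0 (w 1 C))) $ 0 = 3 * C $ 0 + 2 * C $ 1 + C $ 2 + C $ 3 + C $ 4 + C $ 5 + 2 * C $ 6 + 2 * C $ 7"
  "w 1 (w 2 (w 0 (w 1 C))) $ 1 = 2 * C $ 0 + 3 * C $ 1 + C $ 2 + C $ 3 + C $ 4 + C $ 5 + 2 * C $ 6 + 2 * C $ 7"
  "w 1 (w 2 (w 0 (w 1 C))) $ 2 = - C $ 0 - C $ 1 - C $ 3 - C $ 6 - C $ 7"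
  "w 1 (w 2 (w 0 (w 1 C))) $ 3 = - C $ 0 - C $ 1 - C $ 2 - C $ 6 - C $ 7"
  "w 1 (w 2 (w 0 (w 1 C))) $ 4 = - C $ 0 - C $ 1 - C $ 5 - C $ 6 - C $ 7"
  "w 1 (w 2 (w 0 (w 1 C))) $ 5 = - C $ 0 - C $ 1 - C $ 4 - C $ 6 - C $ 7"
  "w 1 (w 2 (w 0 (w 1 C))) $ 6 = - 2 * C $ 0 - 2 * C $ 1 - C $ 2 - C $ 3 - C $ 4 - C $ 5 - C $ 6 - 2 * C $ 7"
  "w 1 (w 2 (w 0 (w 1 C))) $ 7 = - 2 * C $ 0 - 2 * C $ 1 - C $ 2 - C $ 3 - C $ 4 - C $ 5 - 2 * C $ 6 - C $ 7"
  "w 1 (w 2 (w 0 (w 1 C))) $ 8 = C $ 8"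
  "w 1 (w 2 (w 0 (w 1 C))) $ 9 = C $ 9"
  by (simp_all only: w1_c A2_c) (simp_all add: algebra_simps)?

lemma A4_c:
  "sigma2 (w 1 (w 2 (w 0 (w 1 C)))) $ 0 = 3 * C $ 0 + 2 * C $ 1 + C $ 2 + C $ 3 + C $ 4 + C $ 5 + 2 * C $ 6 + 2 * C $ 7"
  "sigma2 (w 1 (w 2 (w 0 (w 1 C)))) $ 1 = 2 * C $ 0 + 3 * C $ 1 + C $ 2 + C $ 3 + C $ 4 + C $ 5 + 2 * C $ 6 + 2 * C $ 7"
  "sigma2 (w 1 (w 2 (w 0 (w 1 C)))) $ 2 = - C $ 0 - C $ 1 - C $ 5 - C $ 6 - C $ 7"
  "sigma2 (w 1 (w 2 (w 0 (w 1 C)))) $ 3 = - C $ 0 - C $ 1 - C $ 4 - C $ 6 - C $ 7"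
  "sigma2 (w 1 (w 2 (w 0 (w 1 C)))) $ 4 = - C $ 0 - C $ 1 - C $ 3 - C $ 6 - C $ 7"
  "sigma2 (w 1 (w 2 (w 0 (w 1 C)))) $ 5 = - C $ 0 - C $ 1 - C $ 2 - C $ 6 - C $ 7"
  "sigma2 (w 1 (w 2 (w 0 (w 1 C)))) $ 6 = - 2 * C $ 0 - 2 * C $ 1 - C $ 2 - C $ 3 - C $ 4 - C $ 5 - C $ 6 - 2 * C $ 7"
  "sigma2 (w 1 (w 2 (w 0 (w 1 C)))) $ 7 = - 2 * C $ 0 - 2 * C $ 1 - C $ 2 - C $ 3 - C $ 4 - C $ 5 - 2 * C $ 6 - C $ 7"
  "sigma2 (w 1 (w 2 (w 0 (w 1 C)))) $ 8 = C $ 8"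
  "sigma2 (w 1 (w 2 (w 0 (w 1 C)))) $ 9 = C $ 9"
  by (simp_all only: sigma2_c A3_c) (simp_all add: algebra_simps)?

lemma A5_c:
  "sigma3 (sigma2 (w 1 (w 2 (w 0 (w 1 C))))) $ 0 = 3 * C $ 0 + 2 * C $ 1 + C $ 2 + C $ 3 + C $ 4 + C $ 5 + 2 * C $ 6 + 2 * C $ 7"
  "sigma3 (sigma2 (w 1 (w 2 (w 0 (w 1 C))))) $ 1 = 2 * C $ 0 + 3 * C $ 1 + C $ 2 + C $ 3 + C $ 4 + C $ 5 + 2 * C $ 6 + 2 * C $ 7"
  "sigma3 (sigma2 (w 1 (w 2 (w 0 (w 1 C))))) $ 2 = - C $ 0 - C $ 1 - C $ 5 - C $ 6 - C $ 7"
  "sigma3 (sigma2 (w 1 (w 2 (w 0 (w 1 C))))) $ 3 = - C $ 0 - C $ 1 - C $ 4 - C $ 6 - C $ 7"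
  "sigma3 (sigma2 (w 1 (w 2 (w 0 (w 1 C))))) $ 4 = - C $ 0 - C $ 1 - C $ 3 - C $ 6 - C $ 7"
  "sigma3 (sigma2 (w 1 (w 2 (w 0 (w 1 C))))) $ 5 = - C $ 0 - C $ 1 - C $ 2 - C $ 6 - C $ 7"
  "sigma3 (sigma2 (w 1 (w 2 (w 0 (w 1 C))))) $ 6 = C $ 8"
  "sigma3 (sigma2 (w 1 (w 2 (w 0 (w 1 C))))) $ 7 = C $ 9"
  "sigma3 (sigma2 (w 1 (w 2 (w 0 (w 1 C))))) $ 8 = - 2 * C $ 0 - 2 * C $ 1 - C $ 2 - C $ 3 - C $ 4 - C $ 5 - C $ 6 - 2 * C $ 7"
  "sigma3 (sigma2 (w 1 (w 2 (w 0 (w 1 C))))) $ 9 = - 2 * C $ 0 - 2 * C $ 1 - C $ 2 - C $ 3 - C $ 4 - C $ 5 - 2 * C $ 6 - C $ 7"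
  by (simp_all only: sigma3_c A4_c) (simp_all add: algebra_simps)?

lemma P1_c:
  "w 2 (w 0 C) $ 0 = C $ 0"
  "w 2 (w 0 C) $ 1 = 2 * C $ 0 + C $ 1 + C $ 2 + C $ 3 + C $ 4 + C $ 5"
  "w 2 (w 0 C) $ 2 = - C $ 0 - C $ 3"
  "w 2 (w 0 C) $ 3 = - C $ 0 - C $ 2"
  "w 2 (w 0 C) $ 4 = - C $ 0 - C $ 5"
  "w 2 (w 0 C) $ 5 = - C $ 0 - C $ 4"
  "w 2 (w 0 C) $ 6 = C $ 6"
  "w 2 (w 0 C) $ 7 = C $ 7"
  "w 2 (w 0 C) $ 8 = C $ 8"
  "w 2 (w 0 C) $ 9 = C $ 9"
  by (simp_all only: w2_c w0_c) (simp_all add: algebra_simps)?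

lemma P2_c:
  "w 1 (w 2 (w 0 C)) $ 0 = 3 * C $ 0 + C $ 1 + C $ 2 + C $ 3 + C $ 4 + C $ 5 + C $ 6 + C $ 7"
  "w 1 (w 2 (w 0 C)) $ 1 = 2 * C $ 0 + C $ 1 + C $ 2 + C $ 3 + C $ 4 + C $ 5"
  "w 1 (w 2 (w 0 C)) $ 2 = - C $ 0 - C $ 3"
  "w 1 (w 2 (w 0 C)) $ 3 = - C $ 0 - C $ 2"
  "w 1 (w 2 (w 0 C)) $ 4 = - C $ 0 - C $ 5"
  "w 1 (w 2 (w 0 C)) $ 5 = - C $ 0 - C $ 4"
  "w 1 (w 2 (w 0 C)) $ 6 = - 2 * C $ 0 - C $ 1 - C $ 2 - C $ 3 - C $ 4 - C $ 5 - C $ 7"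
  "w 1 (w 2 (w 0 C)) $ 7 = - 2 * C $ 0 - C $ 1 - C $ 2 - C $ 3 - C $ 4 - C $ 5 - C $ 6"
  "w 1 (w 2 (w 0 C)) $ 8 = C $ 8"
  "w 1 (w 2 (w 0 C)) $ 9 = C $ 9"
  by (simp_all only: w1_c P1_c) (simp_all add: algebra_simps)?

lemma P3_c:
  "w 3 (w 1 (w 2 (w 0 C))) $ 0 = 5 * C $ 0 + 2 * C $ 1 + 2 * C $ 2 + 2 * C $ 3 + 2 * C $ 4 + 2 * C $ 5 + C $ 6 + C $ 7 + C $ 8 + C $ 9"
  "w 3 (w 1 (w 2 (w 0 C))) $ 1 = 2 * C $ 0 + C $ 1 + C $ 2 + C $ 3 + C $ 4 + C $ 5"
  "w 3 (w 1 (w 2 (w 0 C))) $ 2 = - C $ 0 - C $ 3"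
  "w 3 (w 1 (w 2 (w 0 C))) $ 3 = - C $ 0 - C $ 2"
  "w 3 (w 1 (w 2 (w 0 C))) $ 4 = - C $ 0 - C $ 5"
  "w 3 (w 1 (w 2 (w 0 C))) $ 5 = - C $ 0 - C $ 4"
  "w 3 (w 1 (w 2 (w 0 C))) $ 6 = - 2 * C $ 0 - C $ 1 - C $ 2 - C $ 3 - C $ 4 - C $ 5 - C $ 7"
  "w 3 (w 1 (w 2 (w 0 C))) $ 7 = - 2 * C $ 0 - C $ 1 - C $ 2 - C $ 3 - C $ 4 - C $ 5 - C $ 6"
  "w 3 (w 1 (w 2 (w 0 C))) $ 8 = - 2 * C $ 0 - C $ 1 - C $ 2 - C $ 3 - C $ 4 - C $ 5 - C $ 9"
  "w 3 (w 1 (w 2 (w 0 C))) $ 9 = - 2 * C $ 0 - C $ 1 - C $ 2 - C $ 3 - C $ 4 - C $ 5 - C $ 8"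
  by (simp_all only: w3_c P2_c) (simp_all add: algebra_simps)?

lemma P4_c:
  "sigma2 (w 3 (w 1 (w 2 (w 0 C)))) $ 0 = 5 * C $ 0 + 2 * C $ 1 + 2 * C $ 2 + 2 * C $ 3 + 2 * C $ 4 + 2 * C $ 5 + C $ 6 + C $ 7 + C $ 8 + C $ 9"
  "sigma2 (w 3 (w 1 (w 2 (w 0 C)))) $ 1 = 2 * C $ 0 + C $ 1 + C $ 2 + C $ 3 + C $ 4 + C $ 5"
  "sigma2 (w 3 (w 1 (w 2 (w 0 C)))) $ 2 = - C $ 0 - C $ 5"
  "sigma2 (w 3 (w 1 (w 2 (w 0 C)))) $ 3 = - C $ 0 - C $ 4"
  "sigma2 (w 3 (w 1 (w 2 (w 0 C)))) $ 4 = - C $ 0 - C $ 3"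
  "sigma2 (w 3 (w 1 (w 2 (w 0 C)))) $ 5 = - C $ 0 - C $ 2"
  "sigma2 (w 3 (w 1 (w 2 (w 0 C)))) $ 6 = - 2 * C $ 0 - C $ 1 - C $ 2 - C $ 3 - C $ 4 - C $ 5 - C $ 7"
  "sigma2 (w 3 (w 1 (w 2 (w 0 C)))) $ 7 = - 2 * C $ 0 - C $ 1 - C $ 2 - C $ 3 - C $ 4 - C $ 5 - C $ 6"
  "sigma2 (w 3 (w 1 (w 2 (w 0 C)))) $ 8 = - 2 * C $ 0 - C $ 1 - C $ 2 - C $ 3 - C $ 4 - C $ 5 - C $ 9"
  "sigma2 (w 3 (w 1 (w 2 (w 0 C)))) $ 9 = - 2 * C $ 0 - C $ 1 - C $ 2 - C $ 3 - C $ 4 - C $ 5 - C $ 8"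
  by (simp_all only: sigma2_c P3_c) (simp_all add: algebra_simps)?

lemma P5_c:
  "sigma3 (sigma2 (w 3 (w 1 (w 2 (w 0 C))))) $ 0 = 5 * C $ 0 + 2 * C $ 1 + 2 * C $ 2 + 2 * C $ 3 + 2 * C $ 4 + 2 * C $ 5 + C $ 6 + C $ 7 + C $ 8 + C $ 9"
  "sigma3 (sigma2 (w 3 (w 1 (w 2 (w 0 C))))) $ 1 = 2 * C $ 0 + C $ 1 + C $ 2 + C $ 3 + C $ 4 + C $ 5"
  "sigma3 (sigma2 (w 3 (w 1 (w 2 (w 0 C))))) $ 2 = - C $ 0 - C $ 5"
  "sigma3 (sigma2 (w 3 (w 1 (w 2 (w 0 C))))) $ 3 = - C $ 0 - C $ 4"
  "sigma3 (sigma2 (w 3 (w 1 (w 2 (w 0 C))))) $ 4 = - C $ 0 - C $ 3"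
  "sigma3 (sigma2 (w 3 (w 1 (w 2 (w 0 C))))) $ 5 = - C $ 0 - C $ 2"
  "sigma3 (sigma2 (w 3 (w 1 (w 2 (w 0 C))))) $ 6 = - 2 * C $ 0 - C $ 1 - C $ 2 - C $ 3 - C $ 4 - C $ 5 - C $ 9"
  "sigma3 (sigma2 (w 3 (w 1 (w 2 (w 0 C))))) $ 7 = - 2 * C $ 0 - C $ 1 - C $ 2 - C $ 3 - C $ 4 - C $ 5 - C $ 8"
  "sigma3 (sigma2 (w 3 (w 1 (w 2 (w 0 C))))) $ 8 = - 2 * C $ 0 - C $ 1 - C $ 2 - C $ 3 - C $ 4 - C $ 5 - C $ 7"
  "sigma3 (sigma2 (w 3 (w 1 (w 2 (w 0 C))))) $ 9 = - 2 * C $ 0 - C $ 1 - C $ 2 - C $ 3 - C $ 4 - C $ 5 - C $ 6"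
  by (simp_all only: sigma3_c P4_c) (simp_all add: algebra_simps)?

lemma B1_c:
  "w 0 (w 1 C) $ 0 = C $ 0 + C $ 1 + C $ 6 + C $ 7"
  "w 0 (w 1 C) $ 1 = C $ 0 + 2 * C $ 1 + C $ 2 + C $ 3 + C $ 6 + C $ 7"
  "w 0 (w 1 C) $ 2 = - C $ 0 - C $ 1 - C $ 3 - C $ 6 - C $ 7"
  "w 0 (w 1 C) $ 3 = - C $ 0 - C $ 1 - C $ 2 - C $ 6 - C $ 7"
  "w 0 (w 1 C) $ 4 = C $ 4"
  "w 0 (w 1 C) $ 5 = C $ 5"
  "w 0 (w 1 C) $ 6 = - C $ 1 - C $ 7"
  "w 0 (w 1 C) $ 7 = - C $ 1 - C $ 6"
  "w 0 (w 1 C) $ 8 = C $ 8"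
  "w 0 (w 1 C) $ 9 = C $ 9"
  by (simp_all only: w0_c w1_c) (simp_all add: algebra_simps)?

lemma B2_c:
  "w 2 (w 0 (w 1 C)) $ 0 = C $ 0 + C $ 1 + C $ 6 + C $ 7"
  "w 2 (w 0 (w 1 C)) $ 1 = 2 * C $ 0 + 3 * C $ 1 + C $ 2 + C $ 3 + C $ 4 + C $ 5 + 2 * C $ 6 + 2 * C $ 7"
  "w 2 (w 0 (w 1 C)) $ 2 = - C $ 0 - C $ 1 - C $ 3 - C $ 6 - C $ 7"
  "w 2 (w 0 (w 1 C)) $ 3 = - C $ 0 - C $ 1 - C $ 2 - C $ 6 - C $ 7"
  "w 2 (w 0 (w 1 C)) $ 4 = - C $ 0 - C $ 1 - C $ 5 - C $ 6 - C $ 7"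
  "w 2 (w 0 (w 1 C)) $ 5 = - C $ 0 - C $ 1 - C $ 4 - C $ 6 - C $ 7"
  "w 2 (w 0 (w 1 C)) $ 6 = - C $ 1 - C $ 7"
  "w 2 (w 0 (w 1 C)) $ 7 = - C $ 1 - C $ 6"
  "w 2 (w 0 (w 1 C)) $ 8 = C $ 8"
  "w 2 (w 0 (w 1 C)) $ 9 = C $ 9"
  by (simp_all only: w2_c B1_c) (simp_all add: algebra_simps)?

lemma B3_c:
  "w 1 (w 2 (w 0 (w 1 C))) $ 0 = 3 * C $ 0 + 2 * C $ 1 + C $ 2 + C $ 3 + C $ 4 + C $ 5 + 2 * C $ 6 + 2 * C $ 7"
  "w 1 (w 2 (w 0 (w 1 C))) $ 1 = 2 * C $ 0 + 3 * C $ 1 + C $ 2 + C $ 3 + C $ 4 + C $ 5 + 2 * C $ 6 + 2 * C $ 7"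
  "w 1 (w 2 (w 0 (w 1 C))) $ 2 = - C $ 0 - C $ 1 - C $ 3 - C $ 6 - C $ 7"
  "w 1 (w 2 (w 0 (w 1 C))) $ 3 = - C $ 0 - C $ 1 - C $ 2 - C $ 6 - C $ 7"
  "w 1 (w 2 (w 0 (w 1 C))) $ 4 = - C $ 0 - C $ 1 - C $ 5 - C $ 6 - C $ 7"
  "w 1 (w 2 (w 0 (w 1 C))) $ 5 = - C $ 0 - C $ 1 - C $ 4 - C $ 6 - C $ 7"
  "w 1 (w 2 (w 0 (w 1 C))) $ 6 = - 2 * C $ 0 - 2 * C $ 1 - C $ 2 - C $ 3 - C $ 4 - C $ 5 - C $ 6 - 2 * C $ 7"
  "w 1 (w 2 (w 0 (w 1 C))) $ 7 = - 2 * C $ 0 - 2 * C $ 1 - C $ 2 - C $ 3 - C $ 4 - C $ 5 - 2 * C $ 6 - C $ 7"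
  "w 1 (w 2 (w 0 (w 1 C))) $ 8 = C $ 8"
  "w 1 (w 2 (w 0 (w 1 C))) $ 9 = C $ 9"
  by (simp_all only: w1_c B2_c) (simp_all add: algebra_simps)?

lemma B4_c:
  "w 3 (w 1 (w 2 (w 0 (w 1 C)))) $ 0 = 5 * C $ 0 + 5 * C $ 1 + 2 * C $ 2 + 2 * C $ 3 + 2 * C $ 4 + 2 * C $ 5 + 4 * C $ 6 + 4 * C $ 7 + C $ 8 + C $ 9"
  "w 3 (w 1 (w 2 (w 0 (w 1 C)))) $ 1 = 2 * C $ 0 + 3 * C $ 1 + C $ 2 + C $ 3 + C $ 4 + C $ 5 + 2 * C $ 6 + 2 * C $ 7"
  "w 3 (w 1 (w 2 (w 0 (w 1 C)))) $ 2 = - C $ 0 - C $ 1 - C $ 3 - C $ 6 - C $ 7"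
  "w 3 (w 1 (w 2 (w 0 (w 1 C)))) $ 3 = - C $ 0 - C $ 1 - C $ 2 - C $ 6 - C $ 7"
  "w 3 (w 1 (w 2 (w 0 (w 1 C)))) $ 4 = - C $ 0 - C $ 1 - C $ 5 - C $ 6 - C $ 7"
  "w 3 (w 1 (w 2 (w 0 (w 1 C)))) $ 5 = - C $ 0 - C $ 1 - C $ 4 - C $ 6 - C $ 7"
  "w 3 (w 1 (w 2 (w 0 (w 1 C)))) $ 6 = - 2 * C $ 0 - 2 * C $ 1 - C $ 2 - C $ 3 - C $ 4 - C $ 5 - C $ 6 - 2 * C $ 7"
  "w 3 (w 1 (w 2 (w 0 (w 1 C)))) $ 7 = - 2 * C $ 0 - 2 * C $ 1 - C $ 2 - C $ 3 - C $ 4 - C $ 5 - 2 * C $ 6 - C $ 7"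
  "w 3 (w 1 (w 2 (w 0 (w 1 C)))) $ 8 = - 2 * C $ 0 - 3 * C $ 1 - C $ 2 - C $ 3 - C $ 4 - C $ 5 - 2 * C $ 6 - 2 * C $ 7 - C $ 9"
  "w 3 (w 1 (w 2 (w 0 (w 1 C)))) $ 9 = - 2 * C $ 0 - 3 * C $ 1 - C $ 2 - C $ 3 - C $ 4 - C $ 5 - 2 * C $ 6 - 2 * C $ 7 - C $ 8"
  by (simp_all only: w3_c B3_c) (simp_all add: algebra_simps)?

lemma B5_c:
  "sigma2 (w 3 (w 1 (w 2 (w 0 (w 1 C))))) $ 0 = 5 * C $ 0 + 5 * C $ 1 + 2 * C $ 2 + 2 * C $ 3 + 2 * C $ 4 + 2 * C $ 5 + 4 * C $ 6 + 4 * C $ 7 + C $ 8 + C $ 9"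
  "sigma2 (w 3 (w 1 (w 2 (w 0 (w 1 C))))) $ 1 = 2 * C $ 0 + 3 * C $ 1 + C $ 2 + C $ 3 + C $ 4 + C $ 5 + 2 * C $ 6 + 2 * C $ 7"
  "sigma2 (w 3 (w 1 (w 2 (w 0 (w 1 C))))) $ 2 = - C $ 0 - C $ 1 - C $ 5 - C $ 6 - C $ 7"
  "sigma2 (w 3 (w 1 (w 2 (w 0 (w 1 C))))) $ 3 = - C $ 0 - C $ 1 - C $ 4 - C $ 6 - C $ 7"
  "sigma2 (w 3 (w 1 (w 2 (w 0 (w 1 C))))) $ 4 = - C $ 0 - C $ 1 - C $ 3 - C $ 6 - C $ 7"
  "sigma2 (w 3 (w 1 (w 2 (w 0 (w 1 C))))) $ 5 = - C $ 0 - C $ 1 - C $ 2 - C $ 6 - C $ 7"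
  "sigma2 (w 3 (w 1 (w 2 (w 0 (w 1 C))))) $ 6 = - 2 * C $ 0 - 2 * C $ 1 - C $ 2 - C $ 3 - C $ 4 - C $ 5 - C $ 6 - 2 * C $ 7"
  "sigma2 (w 3 (w 1 (w 2 (w 0 (w 1 C))))) $ 7 = - 2 * C $ 0 - 2 * C $ 1 - C $ 2 - C $ 3 - C $ 4 - C $ 5 - 2 * C $ 6 - C $ 7"
  "sigma2 (w 3 (w 1 (w 2 (w 0 (w 1 C))))) $ 8 = - 2 * C $ 0 - 3 * C $ 1 - C $ 2 - C $ 3 - C $ 4 - C $ 5 - 2 * C $ 6 - 2 * C $ 7 - C $ 9"
  "sigma2 (w 3 (w 1 (w 2 (w 0 (w 1 C))))) $ 9 = - 2 * C $ 0 - 3 * C $ 1 - C $ 2 - C $ 3 - C $ 4 - C $ 5 - 2 * C $ 6 - 2 * C $ 7 - C $ 8"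
  by (simp_all only: sigma2_c B4_c) (simp_all add: algebra_simps)?

lemma B6_c:
  "sigma3 (sigma2 (w 3 (w 1 (w 2 (w 0 (w 1 C)))))) $ 0 = 5 * C $ 0 + 5 * C $ 1 + 2 * C $ 2 + 2 * C $ 3 + 2 * C $ 4 + 2 * C $ 5 + 4 * C $ 6 + 4 * C $ 7 + C $ 8 + C $ 9"
  "sigma3 (sigma2 (w 3 (w 1 (w 2 (w 0 (w 1 C)))))) $ 1 = 2 * C $ 0 + 3 * C $ 1 + C $ 2 + C $ 3 + C $ 4 + C $ 5 + 2 * C $ 6 + 2 * C $ 7"
  "sigma3 (sigma2 (w 3 (w 1 (w 2 (w 0 (w 1 C)))))) $ 2 = - C $ 0 - C $ 1 - C $ 5 - C $ 6 - C $ 7"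
  "sigma3 (sigma2 (w 3 (w 1 (w 2 (w 0 (w 1 C)))))) $ 3 = - C $ 0 - C $ 1 - C $ 4 - C $ 6 - C $ 7"
  "sigma3 (sigma2 (w 3 (w 1 (w 2 (w 0 (w 1 C)))))) $ 4 = - C $ 0 - C $ 1 - C $ 3 - C $ 6 - C $ 7"
  "sigma3 (sigma2 (w 3 (w 1 (w 2 (w 0 (w 1 C)))))) $ 5 = - C $ 0 - C $ 1 - C $ 2 - C $ 6 - C $ 7"
  "sigma3 (sigma2 (w 3 (w 1 (w 2 (w 0 (w 1 C)))))) $ 6 = - 2 * C $ 0 - 3 * C $ 1 - C $ 2 - C $ 3 - C $ 4 - C $ 5 - 2 * C $ 6 - 2 * C $ 7 - C $ 9"
  "sigma3 (sigma2 (w 3 (w 1 (w 2 (w 0 (w 1 C)))))) $ 7 = - 2 * C $ 0 - 3 * C $ 1 - C $ 2 - C $ 3 - C $ 4 - C $ 5 - 2 * C $ 6 - 2 * C $ 7 - C $ 8"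
  "sigma3 (sigma2 (w 3 (w 1 (w 2 (w 0 (w 1 C)))))) $ 8 = - 2 * C $ 0 - 2 * C $ 1 - C $ 2 - C $ 3 - C $ 4 - C $ 5 - C $ 6 - 2 * C $ 7"
  "sigma3 (sigma2 (w 3 (w 1 (w 2 (w 0 (w 1 C)))))) $ 9 = - 2 * C $ 0 - 2 * C $ 1 - C $ 2 - C $ 3 - C $ 4 - C $ 5 - 2 * C $ 6 - C $ 7"
  by (simp_all only: sigma3_c B5_c) (simp_all add: algebra_simps)?

lemma B7_c:
  "w 1 (sigma3 (sigma2 (w 3 (w 1 (w 2 (w 0 (w 1 C))))))) $ 0 = 3 * C $ 0 + 2 * C $ 1 + C $ 2 + C $ 3 + C $ 4 + C $ 5 + 2 * C $ 6 + 2 * C $ 7"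
  "w 1 (sigma3 (sigma2 (w 3 (w 1 (w 2 (w 0 (w 1 C))))))) $ 1 = 2 * C $ 0 + 3 * C $ 1 + C $ 2 + C $ 3 + C $ 4 + C $ 5 + 2 * C $ 6 + 2 * C $ 7"
  "w 1 (sigma3 (sigma2 (w 3 (w 1 (w 2 (w 0 (w 1 C))))))) $ 2 = - C $ 0 - C $ 1 - C $ 5 - C $ 6 - C $ 7"
  "w 1 (sigma3 (sigma2 (w 3 (w 1 (w 2 (w 0 (w 1 C))))))) $ 3 = - C $ 0 - C $ 1 - C $ 4 - C $ 6 - C $ 7"
  "w 1 (sigma3 (sigma2 (w 3 (w 1 (w 2 (w 0 (w 1 C))))))) $ 4 = - C $ 0 - C $ 1 - C $ 3 - C $ 6 - C $ 7"
  "w 1 (sigma3 (sigma2 (w 3 (w 1 (w 2 (w 0 (w 1 C))))))) $ 5 = - C $ 0 - C $ 1 - C $ 2 - C $ 6 - C $ 7"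
  "w 1 (sigma3 (sigma2 (w 3 (w 1 (w 2 (w 0 (w 1 C))))))) $ 6 = C $ 8"
  "w 1 (sigma3 (sigma2 (w 3 (w 1 (w 2 (w 0 (w 1 C))))))) $ 7 = C $ 9"
  "w 1 (sigma3 (sigma2 (w 3 (w 1 (w 2 (w 0 (w 1 C))))))) $ 8 = - 2 * C $ 0 - 2 * C $ 1 - C $ 2 - C $ 3 - C $ 4 - C $ 5 - C $ 6 - 2 * C $ 7"
  "w 1 (sigma3 (sigma2 (w 3 (w 1 (w 2 (w 0 (w 1 C))))))) $ 9 = - 2 * C $ 0 - 2 * C $ 1 - C $ 2 - C $ 3 - C $ 4 - C $ 5 - 2 * C $ 6 - C $ 7"
  by (simp_all only: w1_c B6_c) (simp_all add: algebra_simps)?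

lemma ip_iota: "ip (iota C) (iota D) = ip C D"
  unfolding ip_expl iota_c by (simp add: algebra_simps)

lemma dS0: "iota (dStd 0) = dX 0" by (simp only: vec_eq10 o_apply iota_c phiX_c w0_c w1_c w2_c w3_c sigma2_c sigma3_c) (simp add: Sx iota_c phiX_c)
lemma dS1: "iota (dStd 1) = dX 1" by (simp only: vec_eq10 o_apply iota_c phiX_c w0_c w1_c w2_c w3_c sigma2_c sigma3_c) (simp add: Sx iota_c phiX_c)
lemma dS2: "iota (dStd 2) = dX 2" by (simp only: vec_eq10 o_apply iota_c phiX_c w0_c w1_c w2_c w3_c sigma2_c sigma3_c) (simp add: Sx iota_c phiX_c)
lemma dS3: "iota (dStd 3) = dX 3" by (simp only: vec_eq10 o_apply iota_c phiX_c w0_c w1_c w2_c w3_c sigma2_c sigma3_c) (simp add: Sx iota_c phiX_c)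
lemma dS4: "iota (dStd 4) = dX 4" by (simp only: vec_eq10 o_apply iota_c phiX_c w0_c w1_c w2_c w3_c sigma2_c sigma3_c) (simp add: Sx iota_c phiX_c)
lemma dS5: "iota (dStd 5) = dX 5" by (simp only: vec_eq10 o_apply iota_c phiX_c w0_c w1_c w2_c w3_c sigma2_c sigma3_c) (simp add: Sx iota_c phiX_c)

lemma dS: "\<forall>i<6. iota (dStd i) = dX i"
proof (intro allI impI)
  fix i :: nat assume "i < 6"
  then have "i = 0 \<or> i = 1 \<or> i = 2 \<or> i = 3 \<or> i = 4 \<or> i = 5" by arith
  then show "iota (dStd i) = dX i" using dS0 dS1 dS2 dS3 dS4 dS5 by (elim disjE) simp_all
qed

lemma a0: "iota (aStd 0) = F 1 - F 2" by (simp only: vec_eq10 o_apply iota_c phiX_c w0_c w1_c w2_c w3_c sigma2_c sigma3_c) (simp add: Sx iota_c phiX_c)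
lemma a1: "iota (aStd 1) = Hy - Fsum [1,3]" by (simp only: vec_eq10 o_apply iota_c phiX_c w0_c w1_c w2_c w3_c sigma2_c sigma3_c) (simp add: Sx iota_c phiX_c)
lemma a2: "iota (aStd 2) = F 3 - F 4" by (simp only: vec_eq10 o_apply iota_c phiX_c w0_c w1_c w2_c w3_c sigma2_c sigma3_c) (simp add: Sx iota_c phiX_c)
lemma a3: "iota (aStd 3) = 2 *s Hx + Hy - Fsum [1,3,5,6,7,8]" by (simp only: vec_eq10 o_apply iota_c phiX_c w0_c w1_c w2_c w3_c sigma2_c sigma3_c) (simp add: Sx iota_c phiX_c)
lemma dl: "iota deltaStd = - KX" by (simp only: vec_eq10 o_apply iota_c phiX_c w0_c w1_c w2_c w3_c sigma2_c sigma3_c) (simp add: Sx iota_c phiX_c)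
lemma p0: "phiX (iota (aStd 0)) = iota (aStd 0)" by (simp only: vec_eq10 o_apply iota_c phiX_c w0_c w1_c w2_c w3_c sigma2_c sigma3_c) (simp add: Sx iota_c phiX_c)
lemma p1: "phiX (iota (aStd 1)) = iota (aStd 1) - (- KX)" by (simp only: vec_eq10 o_apply iota_c phiX_c w0_c w1_c w2_c w3_c sigma2_c sigma3_c) (simp add: Sx iota_c phiX_c)
lemma p2: "phiX (iota (aStd 2)) = iota (aStd 2)" by (simp only: vec_eq10 o_apply iota_c phiX_c w0_c w1_c w2_c w3_c sigma2_c sigma3_c) (simp add: Sx iota_c phiX_c)
lemma p3: "phiX (iota (aStd 3)) = iota (aStd 3) + (- KX)" by (simp only: vec_eq10 o_apply iota_c phiX_c w0_c w1_c w2_c w3_c sigma2_c sigma3_c) (simp add: Sx iota_c phiX_c)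
lemma ip_iota2: "\<forall>C D. ip (iota C) (iota D) = ip C D"
  using ip_iota by blast

lemma phiw: "phiX (iota C) = iota ((sigma3 \<circ> sigma2 \<circ> w 1 \<circ> w 2 \<circ> w 0 \<circ> w 1) C)"
  by (simp only: vec_eq10 o_apply iota_c phiX_c A5_c B7_c) (simp add: algebra_simps)?
lemma conj: "(sigma3 \<circ> sigma2 \<circ> w 1 \<circ> w 2 \<circ> w 0 \<circ> w 1) C
           = (w 1 \<circ> (sigma3 \<circ> sigma2 \<circ> w 3 \<circ> w 1 \<circ> w 2 \<circ> w 0) \<circ> w 1) C"
  by (simp only: vec_eq10 o_apply iota_c phiX_c A5_c B7_c) (simp add: algebra_simps)?
lemma t0: "(sigma3 \<circ> sigma2 \<circ> w 3 \<circ> w 1 \<circ> w 2 \<circ> w 0) (aStd 0) = aStd 0 - deltaStd" by (simp only: vec_eq10 o_apply P5_c) (simp add: Sx)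
lemma t1: "(sigma3 \<circ> sigma2 \<circ> w 3 \<circ> w 1 \<circ> w 2 \<circ> w 0) (aStd 1) = aStd 1 + deltaStd" by (simp only: vec_eq10 o_apply P5_c) (simp add: Sx)
lemma t2: "(sigma3 \<circ> sigma2 \<circ> w 3 \<circ> w 1 \<circ> w 2 \<circ> w 0) (aStd 2) = aStd 2 - deltaStd" by (simp only: vec_eq10 o_apply P5_c) (simp add: Sx)
lemma t3: "(sigma3 \<circ> sigma2 \<circ> w 3 \<circ> w 1 \<circ> w 2 \<circ> w 0) (aStd 3) = aStd 3 + deltaStd" by (simp only: vec_eq10 o_apply P5_c) (simp add: Sx)

theorem mainTheorem4:
  shows "bij iota \<and> (\<forall>C D. ip (iota C) (iota D) = ip C D)
    \<and> (\<forall>i<6. iota (dStd i) = dX i)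
    \<and> iota (aStd 0) = F 1 - F 2
    \<and> iota (aStd 1) = Hy - Fsum [1,3]
    \<and> iota (aStd 2) = F 3 - F 4
    \<and> iota (aStd 3) = 2 *s Hx + Hy - Fsum [1,3,5,6,7,8]
    \<and> iota deltaStd = - KX
    \<and> phiX (iota (aStd 0)) = iota (aStd 0)
    \<and> phiX (iota (aStd 1)) = iota (aStd 1) - (- KX)
    \<and> phiX (iota (aStd 2)) = iota (aStd 2)
    \<and> phiX (iota (aStd 3)) = iota (aStd 3) + (- KX)
    \<and> (\<forall>C. phiX (iota C) = iota ((sigma3 \<circ> sigma2 \<circ> w 1 \<circ> w 2 \<circ> w 0 \<circ> w 1) C))
    \<and> (\<forall>C. (sigma3 \<circ> sigma2 \<circ> w 1 \<circ> w 2 \<circ> w 0 \<circ> w 1) C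
           = (w 1 \<circ> (sigma3 \<circ> sigma2 \<circ> w 3 \<circ> w 1 \<circ> w 2 \<circ> w 0) \<circ> w 1) C)
    \<and> (sigma3 \<circ> sigma2 \<circ> w 3 \<circ> w 1 \<circ> w 2 \<circ> w 0) (aStd 0) = aStd 0 - deltaStd
    \<and> (sigma3 \<circ> sigma2 \<circ> w 3 \<circ> w 1 \<circ> w 2 \<circ> w 0) (aStd 1) = aStd 1 + deltaStd
    \<and> (sigma3 \<circ> sigma2 \<circ> w 3 \<circ> w 1 \<circ> w 2 \<circ> w 0) (aStd 2) = aStd 2 - deltaStd
    \<and> (sigma3 \<circ> sigma2 \<circ> w 3 \<circ> w 1 \<circ> w 2 \<circ> w 0) (aStd 3) = aStd 3 + deltaStd"
  apply (intro conjI)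
                  apply (fact bij_iota)
                 apply (fact ip_iota2)
                apply (fact dS)
               apply (fact a0)
              apply (fact a1)
             apply (fact a2)
            apply (fact a3)
           apply (fact dl)
          apply (fact p0)
         apply (fact p1)
        apply (fact p2)
       apply (fact p3)
      apply (intro allI, rule phiw)
     apply (intro allI, rule conj)
    apply (fact t0)
   apply (fact t1)
  apply (fact t2)
  apply (fact t3)
  done

end
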